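(* Let $(\mathcal{X},W(y|x),\mathcal{Y})$ be a discrete channel, $P$ a pmf on $\mathcal{X}$, $L\ge1$, and $M\ge L+1$ integers. Let $F\colon[M]\to\mathcal{X}$ have i.i.d. values $F(m)\sim P$, and write $G=G(W)$. Then $$\Pr\{F\text{ is an }(M,L)\text{ zero-error list code for }W\}\le 1-\frac1B,$$ where $$B=\binom{M}{L+1}^{-1}2^{LI_{L+1}(G,P)}+1+\sum_{\ell=1}^L\binom{L+1}{\ell}^2\binom{M}{\ell}^{-1}2^{L\theta^{(\ell)}_{L+1}(G,P)}.$$
   Context: Notation: $[j]=\{1,\dots,j\}$, $[i:j]=\{i,\dots,j\}$; $\log$ base 2. A discrete channel has finite $\mathcal{X},\mathcal{Y}$ and pmfs $W(\cdot|x)$ on $\mathcal{Y}$. $G(W)=(\mathcal{X},\mathcal{E})$ is the hypergraph whose edges are all $e\subseteq\mathcal{X}$ with $\prod_{x\in e}W(y|x)=0$ for every $y\in\mathcal{Y}$. A map $f\colon[M]\to\mathcal{X}$ is an $(M,L)$ zero-error list code for $W$ if for every $(L+1)$-element subset $S\subseteq[M]$, $\{f(m):m\in S\}\in\mathcal{E}$. For $x_{[k]}\in\mathcal{X}^k$, $\sigma(x_{[k]})=\{x_1,\dots,x_k\}$, $P(x_S)=\prod_{j\in S}P(x_j)$. $I_{L+1}(G,P):=-\frac1L\log\sum_{x_{[L+1]}:\sigma(x_{[L+1]})\notin\mathcal{E}}P(x_{[L+1]})$ and for $\ell\in[L]$, $\theta^{(\ell)}_{L+1}(G,P):=2I_{L+1}(G,P)+\frac1L\log\sum_{x_{[\ell]}}P(x_{[\ell]})\Big[\sum_{x_{[\ell+1:L+1]}:\sigma(x_{[L+1]})\notin\mathcal{E}}P(x_{[\ell+1:L+1]})\Big]^2$.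 *)

theory Defs
  imports Complex_Main "HOL-Library.FuncSet"
begin

text \<open>A discrete channel: finite input type 'x, finite output type 'y,
  W x y = W(y|x), a pmf on 'y for every x.\<close>
definition discrete_channel :: "('x::finite \<Rightarrow> 'y::finite \<Rightarrow> real) \<Rightarrow> bool" where
  "discrete_channel W \<longleftrightarrow> (\<forall>x y. 0 \<le> W x y) \<and> (\<forall>x. (\<Sum>y\<in>UNIV. W x y) = 1)"

definition is_pmf :: "('x::finite \<Rightarrow> real) \<Rightarrow> bool" where
  "is_pmf P \<longleftrightarrow> (\<forall>x. 0 \<le> P x) \<and> (\<Sum>x\<in>UNIV. P x) = 1"

definition hyperedges :: "('x::finite \<Rightarrow> 'y::finite \<Rightarrow> real) \<Rightarrow> 'x set set" where
  "hyperedges W = {e. \<forall>y. (\<Prod>x\<in>e. W x y) = 0}"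

definition zero_error_list_code ::
  "('x::finite \<Rightarrow> 'y::finite \<Rightarrow> real) \<Rightarrow> nat \<Rightarrow> nat \<Rightarrow> (nat \<Rightarrow> 'x) \<Rightarrow> bool" where
  "zero_error_list_code W M L f \<longleftrightarrow>
     (\<forall>S. S \<subseteq> {1..M} \<and> card S = L + 1 \<longrightarrow> f ` S \<in> hyperedges W)"

definition nonedge_mass :: "'x set set \<Rightarrow> ('x::finite \<Rightarrow> real) \<Rightarrow> nat \<Rightarrow> real" where
  "nonedge_mass G P L =
     (\<Sum>x\<in>PiE {1..L+1} (\<lambda>_. UNIV).
        if x ` {1..L+1} \<notin> G then (\<Prod>j\<in>{1..L+1}. P (x j)) else 0)"

definition I_hyp :: "'x set set \<Rightarrow> ('x::finite \<Rightarrow> real) \<Rightarrow> nat \<Rightarrow> real" where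
  "I_hyp G P L = - (1 / real L) * log 2 (nonedge_mass G P L)"

definition theta_hyp :: "'x set set \<Rightarrow> ('x::finite \<Rightarrow> real) \<Rightarrow> nat \<Rightarrow> nat \<Rightarrow> real" where
  "theta_hyp G P L l = 2 * I_hyp G P L + (1 / real L) * log 2
     (\<Sum>xa\<in>PiE {1..l} (\<lambda>_. UNIV). (\<Prod>j\<in>{1..l}. P (xa j)) *
        (\<Sum>xb\<in>PiE {l+1..L+1} (\<lambda>_. UNIV).
           if xa ` {1..l} \<union> xb ` {l+1..L+1} \<notin> G
           then (\<Prod>j\<in>{l+1..L+1}. P (xb j)) else 0) ^ 2)"

definition code_prob ::
  "('x::finite \<Rightarrow> 'y::finite \<Rightarrow> real) \<Rightarrow> ('x \<Rightarrow> real) \<Rightarrow> nat \<Rightarrow> nat \<Rightarrow> real" where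
  "code_prob W P M L =
     (\<Sum>f\<in>PiE {1..M} (\<lambda>_. UNIV).
        if zero_error_list_code W M L f then (\<Prod>m\<in>{1..M}. P (f m)) else 0)"

end

theory Submission imports Defs "HOL-Analysis.Analysis" begin

definition EE :: "('x \<Rightarrow> real) \<Rightarrow> nat set \<Rightarrow> ((nat \<Rightarrow> 'x) \<Rightarrow> real) \<Rightarrow> real" where
  "EE P D g = (\<Sum>h\<in>PiE D (\<lambda>_. UNIV). (\<Prod>d\<in>D. P (h d)) * g h)"

definition merge :: "nat set \<Rightarrow> (nat \<Rightarrow> 'x) \<Rightarrow> (nat \<Rightarrow> 'x) \<Rightarrow> nat \<Rightarrow> 'x" where
  "merge A a b = (\<lambda>i. if i \<in> A then a i else b i)"

lemma EE_const:
  fixes P :: "'x::finite \<Rightarrow> real"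
  assumes "is_pmf P" "finite D"
  shows "EE P D (\<lambda>_. c) = c"
proof -
  have "(\<Prod>d\<in>D. \<Sum>y\<in>UNIV. P y) = (\<Sum>h\<in>PiE D (\<lambda>_. UNIV). \<Prod>d\<in>D. P (h d))"
    using prod_sum_PiE[of D "\<lambda>_. UNIV" "\<lambda>_ y. P y"] assms(2) by simp
  moreover have "(\<Prod>d\<in>D. \<Sum>y\<in>UNIV. P y) = 1" using assms(1) by (simp add: is_pmf_def)
  ultimately show ?thesis unfolding EE_def by (simp add: sum_distrib_right[symmetric])
qed

lemma EE_cmult: "EE P D (\<lambda>h. c * g h) = c * EE P D g"
  unfolding EE_def by (simp add: sum_distrib_left algebra_simps)

lemma EE_add: "EE P D (\<lambda>h. f h + g h) = EE P D f + EE P D g"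
  unfolding EE_def by (simp add: sum.distrib algebra_simps)

lemma EE_sum: "EE P D (\<lambda>h. \<Sum>s\<in>K. g s h) = (\<Sum>s\<in>K. EE P D (g s))"
  unfolding EE_def by (simp add: sum_distrib_left sum.swap[of _ K])

lemma EE_cong: "(\<And>h. h \<in> PiE D (\<lambda>_. UNIV) \<Longrightarrow> f h = g h) \<Longrightarrow> EE P D f = EE P D g"
  unfolding EE_def by (intro sum.cong) auto

lemma EE_mono: "(\<And>x. 0 \<le> P x) \<Longrightarrow> (\<And>h. h \<in> PiE D (\<lambda>_. UNIV) \<Longrightarrow> f h \<le> g h) \<Longrightarrow> EE P D f \<le> EE P D g"
  unfolding EE_def by (intro sum_mono mult_left_mono) (auto intro: prod_nonneg)

lemma EE_nonneg: "(\<And>x. 0 \<le> P x) \<Longrightarrow> (\<And>h. h \<in> PiE D (\<lambda>_. UNIV) \<Longrightarrow> 0 \<le> g h) \<Longrightarrow> 0 \<le> EE P D g"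
  unfolding EE_def by (intro sum_nonneg mult_nonneg_nonneg) (auto intro: prod_nonneg)

lemma EE_split:
  assumes "finite A" "finite B" "A \<inter> B = {}"
  shows "EE P (A \<union> B) g = EE P A (\<lambda>a. EE P B (\<lambda>b. g (merge A a b)))"
proof -
  let ?U = "\<lambda>_::nat. UNIV :: 'a set"
  have bij: "bij_betw (\<lambda>(a,b). merge A a b) (PiE A ?U \<times> PiE B ?U) (PiE (A \<union> B) ?U)"
  proof (rule bij_betw_byWitness[where f'="\<lambda>h. (restrict h A, restrict h B)"])
    show "\<forall>x\<in>PiE A ?U \<times> PiE B ?U. (\<lambda>h. (restrict h A, restrict h B)) ((\<lambda>(a,b). merge A a b) x) = x"
    proof (intro ballI)
      fix x assume "x \<in> PiE A ?U \<times> PiE B ?U"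
      then obtain a b where x: "x = (a,b)" and a: "a \<in> PiE A ?U" and b: "b \<in> PiE B ?U" by blast
      have 1: "restrict (merge A a b) A = a"
        using a by (intro ext) (simp add: merge_def restrict_def PiE_arb[OF a])
      have 2: "restrict (merge A a b) B = b"
      proof
        fix i show "restrict (merge A a b) B i = b i"
          using assms(3) PiE_arb[OF b, of i] by (cases "i \<in> B") (auto simp: merge_def)
      qed
      show "(\<lambda>h. (restrict h A, restrict h B)) ((\<lambda>(a,b). merge A a b) x) = x" using 1 2 x by simp
    qed
    show "\<forall>h\<in>PiE (A \<union> B) ?U. (\<lambda>(a,b). merge A a b) ((\<lambda>h. (restrict h A, restrict h B)) h) = h"
    proof
      fix h assume h: "h \<in> PiE (A \<union> B) ?U"
      show "(\<lambda>(a,b). merge A a b) ((\<lambda>h. (restrict h A, restrict h B)) h) = h"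
      proof
        fix i show "(\<lambda>(a,b). merge A a b) ((\<lambda>h. (restrict h A, restrict h B)) h) i = h i"
          using PiE_arb[OF h, of i] by (cases "i \<in> A"; cases "i \<in> B") (auto simp: merge_def)
      qed
    qed
    show "(\<lambda>(a,b). merge A a b) ` (PiE A ?U \<times> PiE B ?U) \<subseteq> PiE (A \<union> B) ?U"
    proof clarify
      fix a b assume a: "a \<in> PiE A ?U" and b: "b \<in> PiE B ?U"
      show "merge A a b \<in> PiE (A \<union> B) ?U"
        using a b unfolding PiE_iff extensional_def merge_def by auto
    qed
    show "(\<lambda>h. (restrict h A, restrict h B)) ` PiE (A \<union> B) ?U \<subseteq> PiE A ?U \<times> PiE B ?U"
      by auto
  qed
  have w: "(\<Prod>d\<in>A \<union> B. P (merge A a b d)) = (\<Prod>d\<in>A. P (a d)) * (\<Prod>d\<in>B. P (b d))" for a b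
  proof -
    have "(\<Prod>d\<in>A \<union> B. P (merge A a b d)) = (\<Prod>d\<in>A. P (merge A a b d)) * (\<Prod>d\<in>B. P (merge A a b d))"
      using assms by (simp add: prod.union_disjoint)
    also have "\<dots> = (\<Prod>d\<in>A. P (a d)) * (\<Prod>d\<in>B. P (b d))"
    proof -
      have "(\<Prod>d\<in>A. P (merge A a b d)) = (\<Prod>d\<in>A. P (a d))" by (rule prod.cong) (auto simp: merge_def)
      moreover have "(\<Prod>d\<in>B. P (merge A a b d)) = (\<Prod>d\<in>B. P (b d))" 
        using assms(3) by (intro prod.cong) (auto simp: merge_def)
      ultimately show ?thesis by simp
    qed
    finally show ?thesis .
  qed
  have "EE P (A \<union> B) g = (\<Sum>x\<in>PiE A ?U \<times> PiE B ?U. (\<Prod>d\<in>A \<union> B. P (merge A (fst x) (snd x) d)) * g (merge A (fst x) (snd x)))"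
    unfolding EE_def sum.reindex_bij_betw[OF bij, symmetric] by (simp add: case_prod_beta)
  also have "\<dots> = (\<Sum>a\<in>PiE A ?U. \<Sum>b\<in>PiE B ?U. (\<Prod>d\<in>A. P (a d)) * ((\<Prod>d\<in>B. P (b d)) * g (merge A a b)))"
    by (simp add: sum.cartesian_product w algebra_simps case_prod_beta)
  also have "\<dots> = EE P A (\<lambda>a. EE P B (\<lambda>b. g (merge A a b)))"
    unfolding EE_def by (simp add: sum_distrib_left)
  finally show ?thesis .
qed

lemma merge_image1: "merge A a b ` A = a ` A"
  by (auto simp: merge_def)

lemma merge_image2: "A \<inter> B = {} \<Longrightarrow> merge A a b ` B = b ` B"
  by (force simp: merge_def image_def)

lemma EE_local:
  fixes P :: "'x::finite \<Rightarrow> real"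
  assumes "is_pmf P" "finite D'" "D \<subseteq> D'" and dep: "\<And>h h'. (\<And>i. i \<in> D \<Longrightarrow> h i = h' i) \<Longrightarrow> g h = g h'"
  shows "EE P D' g = EE P D g"
proof -
  have fD: "finite D" using assms(2,3) finite_subset by blast
  have eq: "D' = D \<union> (D' - D)" using assms(3) by blast
  have "EE P D' g = EE P D (\<lambda>a. EE P (D' - D) (\<lambda>b. g (merge D a b)))"
    by (subst eq, rule EE_split) (use fD assms(2) in auto)
  also have "\<dots> = EE P D (\<lambda>a. EE P (D' - D) (\<lambda>b. g a))"
    by (intro EE_cong arg_cong[where f="EE P (D' - D)"] ext dep) (simp add: merge_def)
  also have "\<dots> = EE P D g"
    using EE_const[OF assms(1)] assms(2) by simp
  finally show ?thesis .
qed

lemma EE_image: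
  assumes "finite D1" "finite D2" "card D1 = card D2"
  shows "EE P D2 (\<lambda>h. F (h ` D2)) = EE P D1 (\<lambda>x. F (x ` D1))"
proof -
  let ?U = "\<lambda>_::nat. UNIV :: 'a set"
  obtain \<pi> where pi: "bij_betw \<pi> D1 D2" using finite_same_card_bij[OF assms] by blast
  define \<psi> where "\<psi> = (\<lambda>y::nat\<Rightarrow>'a. restrict (\<lambda>j. y (\<pi> j)) D1)"
  have bij: "bij_betw \<psi> (PiE D2 ?U) (PiE D1 ?U)"
  proof (rule bij_betw_byWitness[where f'="\<lambda>x. restrict (\<lambda>i. x (inv_into D1 \<pi> i)) D2"])
    show "\<forall>y\<in>PiE D2 ?U. restrict (\<lambda>i. \<psi> y (inv_into D1 \<pi> i)) D2 = y"
    proof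
      fix y assume y: "y \<in> PiE D2 ?U"
      show "restrict (\<lambda>i. \<psi> y (inv_into D1 \<pi> i)) D2 = y"
      proof
        fix i show "restrict (\<lambda>i. \<psi> y (inv_into D1 \<pi> i)) D2 i = y i"
          using PiE_arb[OF y, of i] pi
          by (cases "i \<in> D2") (auto simp: \<psi>_def bij_betw_def inv_into_into f_inv_into_f)
      qed
    qed
    show "\<forall>x\<in>PiE D1 ?U. \<psi> (restrict (\<lambda>i. x (inv_into D1 \<pi> i)) D2) = x"
    proof
      fix x assume x: "x \<in> PiE D1 ?U"
      show "\<psi> (restrict (\<lambda>i. x (inv_into D1 \<pi> i)) D2) = x"
      proof
        fix j show "\<psi> (restrict (\<lambda>i. x (inv_into D1 \<pi> i)) D2) j = x j"
          using PiE_arb[OF x, of j] pi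
          by (cases "j \<in> D1") (auto simp: \<psi>_def bij_betw_def)
      qed
    qed
    show "\<psi> ` PiE D2 ?U \<subseteq> PiE D1 ?U" by (auto simp: \<psi>_def)
    show "(\<lambda>x. restrict (\<lambda>i. x (inv_into D1 \<pi> i)) D2) ` PiE D1 ?U \<subseteq> PiE D2 ?U" by auto
  qed
  have w: "(\<Prod>d\<in>D1. P (\<psi> y d)) = (\<Prod>d\<in>D2. P (y d))" for y
  proof -
    have "(\<Prod>d\<in>D1. P (\<psi> y d)) = (\<Prod>d\<in>D1. P (y (\<pi> d)))" by (simp add: \<psi>_def)
    also have "\<dots> = (\<Prod>d\<in>D2. P (y d))" by (rule prod.reindex_bij_betw[OF pi])
    finally show ?thesis .
  qed
  have im: "\<psi> y ` D1 = y ` D2" for y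
  proof -
    have "\<psi> y ` D1 = y ` (\<pi> ` D1)" by (auto simp: \<psi>_def image_def)
    thus ?thesis using pi by (simp add: bij_betw_def)
  qed
  have "EE P D1 (\<lambda>x. F (x ` D1)) = (\<Sum>y\<in>PiE D2 ?U. (\<Prod>d\<in>D1. P (\<psi> y d)) * F (\<psi> y ` D1))"
    unfolding EE_def by (rule sum.reindex_bij_betw[OF bij, symmetric])
  also have "\<dots> = EE P D2 (\<lambda>h. F (h ` D2))" unfolding EE_def w im ..
  finally show ?thesis ..
qed

lemma EE_prod:
  fixes P :: "'x::finite \<Rightarrow> real"
  assumes "finite A" "finite B" "A \<inter> B = {}"
  shows "EE P (A \<union> B) (\<lambda>h. u (h ` A) * v (h ` B)) = EE P A (\<lambda>h. u (h ` A)) * EE P B (\<lambda>h. v (h ` B))"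
proof -
  have "EE P (A \<union> B) (\<lambda>h. u (h ` A) * v (h ` B)) = EE P A (\<lambda>a. EE P B (\<lambda>b. u (a ` A) * v (b ` B)))"
    by (subst EE_split[OF assms]) (simp add: merge_image1 merge_image2[OF assms(3)])
  also have "\<dots> = EE P A (\<lambda>a. u (a ` A) * EE P B (\<lambda>b. v (b ` B)))" by (simp add: EE_cmult)
  also have "\<dots> = EE P A (\<lambda>h. u (h ` A)) * EE P B (\<lambda>h. v (h ` B))"
    using EE_cmult[of P A "EE P B (\<lambda>b. v (b ` B))" "\<lambda>h. u (h ` A)"] by (simp add: mult.commute)
  finally show ?thesis .
qed

definition ind :: "'x set set \<Rightarrow> 'x set \<Rightarrow> real" where
  "ind G Z = (if Z \<notin> G then 1 else 0)"

definition Qf :: "'x set set \<Rightarrow> ('x \<Rightarrow> real) \<Rightarrow> nat \<Rightarrow> nat \<Rightarrow> 'x set \<Rightarrow> real" where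
  "Qf G P L l Z = EE P {l+1..L+1} (\<lambda>xb. ind G (Z \<union> xb ` {l+1..L+1}))"

definition Tl :: "'x set set \<Rightarrow> ('x \<Rightarrow> real) \<Rightarrow> nat \<Rightarrow> nat \<Rightarrow> real" where
  "Tl G P L l = EE P {1..l} (\<lambda>xa. (Qf G P L l (xa ` {1..l}))^2)"

lemma nonedge_eq: "nonedge_mass G P L = EE P {1..L+1} (\<lambda>x. ind G (x ` {1..L+1}))"
  unfolding nonedge_mass_def EE_def ind_def by (intro sum.cong) auto

lemma theta_eq: "(\<Sum>xa\<in>PiE {1..l} (\<lambda>_. UNIV). (\<Prod>j\<in>{1..l}. P (xa j)) *
        (\<Sum>xb\<in>PiE {l+1..L+1} (\<lambda>_. UNIV).
           if xa ` {1..l} \<union> xb ` {l+1..L+1} \<notin> G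
           then (\<Prod>j\<in>{l+1..L+1}. P (xb j)) else 0) ^ 2) = Tl G P L l"
  unfolding Tl_def Qf_def EE_def ind_def
  by (intro sum.cong arg_cong2[where f="(*)"] refl arg_cong[where f="\<lambda>x. x^2"]) auto

lemma ind_sq: "ind G Z * ind G Z = ind G Z" by (simp add: ind_def)
lemma ind_nonneg: "0 \<le> ind G Z" by (simp add: ind_def)

lemma T0_eq: "Tl G P L 0 = (nonedge_mass G P L)^2"
  unfolding Tl_def Qf_def nonedge_eq by (simp add: EE_def)

lemma single_eq:
  fixes P :: "'x::finite \<Rightarrow> real"
  assumes "is_pmf P" "S \<subseteq> {1..M}" "card S = L + 1"
  shows "EE P {1..M} (\<lambda>f. ind G (f ` S) * ind G (f ` S)) = nonedge_mass G P L"
proof -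
  have fS: "finite S" using assms(2) finite_subset by blast
  have "EE P {1..M} (\<lambda>f. ind G (f ` S) * ind G (f ` S)) = EE P {1..M} (\<lambda>f. ind G (f ` S))"
    by (simp add: ind_sq)
  also have "\<dots> = EE P S (\<lambda>f. ind G (f ` S))"
    by (rule EE_local[OF assms(1) _ assms(2)]) (auto intro!: arg_cong[where f="ind G"] image_cong)
  also have "\<dots> = EE P {1..L+1} (\<lambda>f. ind G (f ` {1..L+1}))"
    by (rule EE_image) (use fS assms(3) in auto)
  finally show ?thesis by (simp add: nonedge_eq)
qed

lemma pair_eq:
  fixes P :: "'x::finite \<Rightarrow> real"
  assumes "is_pmf P" "S \<subseteq> {1..M}" "T \<subseteq> {1..M}" "card S = L + 1" "card T = L + 1"
    "card (S \<inter> T) = l" "l \<le> L"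
  shows "EE P {1..M} (\<lambda>f. ind G (f ` S) * ind G (f ` T)) = Tl G P L l"
proof -
  define I where "I = S \<inter> T"
  define S' where "S' = S - T"
  define T' where "T' = T - S"
  have fS: "finite S" using assms(2) finite_subset by blast
  have fT: "finite T" using assms(3) finite_subset by blast
  have fin: "finite I" "finite S'" "finite T'" using fS fT by (auto simp: I_def S'_def T'_def)
  have cS': "card S' = L + 1 - l" unfolding S'_def using card_Diff_subset_Int[of S T] fS assms by simp
  have cT': "card T' = L + 1 - l" unfolding T'_def using card_Diff_subset_Int[of T S] fT assms
    by (simp add: Int_commute)
  have cI: "card I = l" using assms I_def by simp
  have "EE P {1..M} (\<lambda>f. ind G (f ` S) * ind G (f ` T)) = EE P (S \<union> T) (\<lambda>f. ind G (f ` S) * ind G (f ` T))"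
    by (rule EE_local[OF assms(1)]) (use assms(2,3) in \<open>auto intro!: arg_cong2[where f="(*)"] arg_cong[where f="ind G"] image_cong\<close>)
  also have "S \<union> T = I \<union> (S' \<union> T')" by (auto simp: I_def S'_def T'_def)
  also have "EE P (I \<union> (S' \<union> T')) (\<lambda>f. ind G (f ` S) * ind G (f ` T))
     = EE P I (\<lambda>a. EE P (S' \<union> T') (\<lambda>h. ind G (merge I a h ` S) * ind G (merge I a h ` T)))"
    by (rule EE_split) (use fin in \<open>auto simp: I_def S'_def T'_def\<close>)
  also have "\<dots> = EE P I (\<lambda>a. EE P (S' \<union> T') (\<lambda>h. ind G (a ` I \<union> h ` S') * ind G (a ` I \<union> h ` T')))"
  proof (intro EE_cong arg_cong[where f="EE P (S' \<union> T')"] ext)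
    fix a h :: "nat \<Rightarrow> 'x"
    have "S = I \<union> S'" "T = I \<union> T'" "I \<inter> S' = {}" "I \<inter> T' = {}" by (auto simp: I_def S'_def T'_def)
    then have "merge I a h ` S = a ` I \<union> h ` S'" "merge I a h ` T = a ` I \<union> h ` T'"
      by (metis image_Un merge_image1 merge_image2)+
    then show "ind G (merge I a h ` S) * ind G (merge I a h ` T) = ind G (a ` I \<union> h ` S') * ind G (a ` I \<union> h ` T')"
      by simp
  qed
  also have "\<dots> = EE P I (\<lambda>a. (Qf G P L l (a ` I))^2)"
  proof (intro EE_cong)
    fix a :: "nat \<Rightarrow> 'x"
    have "EE P (S' \<union> T') (\<lambda>h. ind G (a ` I \<union> h ` S') * ind G (a ` I \<union> h ` T'))
       = EE P S' (\<lambda>h. ind G (a ` I \<union> h ` S')) * EE P T' (\<lambda>h. ind G (a ` I \<union> h ` T'))"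
      by (rule EE_prod[where u="\<lambda>Y. ind G (a ` I \<union> Y)" and v="\<lambda>Y. ind G (a ` I \<union> Y)"])
         (use fin in \<open>auto simp: S'_def T'_def\<close>)
    also have "EE P S' (\<lambda>h. ind G (a ` I \<union> h ` S')) = Qf G P L l (a ` I)"
      unfolding Qf_def by (rule EE_image) (use fin cS' in auto)
    also have "EE P T' (\<lambda>h. ind G (a ` I \<union> h ` T')) = Qf G P L l (a ` I)"
      unfolding Qf_def by (rule EE_image) (use fin cT' in auto)
    finally show "EE P (S' \<union> T') (\<lambda>h. ind G (a ` I \<union> h ` S') * ind G (a ` I \<union> h ` T')) = (Qf G P L l (a ` I))^2"
      by (simp add: power2_eq_square)
  qed
  also have "\<dots> = Tl G P L l"
    unfolding Tl_def by (rule EE_image) (use fin cI in auto)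
  finally show ?thesis .
qed


lemma choose_mono_n: "m \<le> n \<Longrightarrow> m choose k \<le> n choose k"
proof -
  assume "m \<le> n"
  have "card {B. B \<subseteq> {..<m} \<and> card B = k} \<le> card {B. B \<subseteq> {..<n} \<and> card B = k}"
    by (rule card_mono) (use \<open>m \<le> n\<close> in auto)
  thus ?thesis by (simp add: n_subsets)
qed

lemma count_le:
  assumes "S \<subseteq> {1..M}" "card S = L + 1"
  shows "card {T. (T \<subseteq> {1..M} \<and> card T = L + 1) \<and> card (S \<inter> T) = l}
         \<le> (L + 1 choose l) * ((M - (L + 1)) choose (L + 1 - l))"
proof -
  have fS: "finite S" using assms(1) finite_subset by blast
  let ?A = "{A. A \<subseteq> S \<and> card A = l}"
  let ?B = "{B. B \<subseteq> {1..M} - S \<and> card B = L + 1 - l}"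
  have "card {T. (T \<subseteq> {1..M} \<and> card T = L + 1) \<and> card (S \<inter> T) = l} \<le> card (?A \<times> ?B)"
  proof (rule card_inj_on_le[where f="\<lambda>T. (S \<inter> T, T - S)"])
    show "inj_on (\<lambda>T. (S \<inter> T, T - S)) {T. (T \<subseteq> {1..M} \<and> card T = L + 1) \<and> card (S \<inter> T) = l}"
      by (rule inj_onI) (metis Diff_partition Int_lower1 Un_Diff_Int inf_commute prod.inject)
    show "(\<lambda>T. (S \<inter> T, T - S)) ` {T. (T \<subseteq> {1..M} \<and> card T = L + 1) \<and> card (S \<inter> T) = l} \<subseteq> ?A \<times> ?B"
    proof (intro image_subsetI)
      fix T assume "T \<in> {T. (T \<subseteq> {1..M} \<and> card T = L + 1) \<and> card (S \<inter> T) = l}"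
      then have T: "T \<subseteq> {1..M}" "card T = L + 1" "card (S \<inter> T) = l" by auto
      have fT: "finite T" using T(1) finite_subset by blast
      have "card (T - S) = card T - card (T \<inter> S)" using card_Diff_subset_Int[of T S] fT by simp
      then show "(S \<inter> T, T - S) \<in> ?A \<times> ?B"
        using T by (auto simp: Int_commute)
    qed
    show "finite (?A \<times> ?B)" using fS by auto
  qed
  also have "card (?A \<times> ?B) = (L + 1 choose l) * ((M - (L + 1)) choose (L + 1 - l))"
    using fS assms by (simp add: card_cartesian_product n_subsets card_Diff_subset)
  finally show ?thesis .
qed

lemma binom_bound:
  assumes "l \<le> L + 1" "L + 1 \<le> M"
  shows "real ((L + 1 choose l) * ((M - (L + 1)) choose (L + 1 - l)))
     \<le> real (M choose (L + 1)) * (real (L + 1 choose l))^2 / real (M choose l)"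
proof -
  have pos: "0 < real (M choose l)" using assms by simp
  have e: "(M choose (L+1)) * (L+1 choose l) = (M choose l) * ((M - l) choose (L + 1 - l))"
    by (rule choose_mult) (use assms in auto)
  have m: "(M - (L + 1)) choose (L + 1 - l) \<le> (M - l) choose (L + 1 - l)"
    by (rule choose_mono_n) (use assms in auto)
  have "real (M choose l) * real ((L + 1 choose l) * ((M - (L + 1)) choose (L + 1 - l)))
       \<le> real (M choose l) * real ((L + 1 choose l) * ((M - l) choose (L + 1 - l)))"
    using m by (intro mult_left_mono) (auto simp del: of_nat_mult)
  also have "\<dots> = real (M choose (L + 1)) * (real (L + 1 choose l))^2"
  proof -
    have e': "real (M choose (L+1)) * real (L+1 choose l) = real (M choose l) * real ((M - l) choose (L + 1 - l))"
      using e by (metis of_nat_mult)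
    have "real (M choose l) * real ((L + 1 choose l) * ((M - l) choose (L + 1 - l)))
        = real (L + 1 choose l) * (real (M choose l) * real ((M - l) choose (L + 1 - l)))"
      unfolding of_nat_mult by (simp only: ac_simps)
    also have "\<dots> = real (L + 1 choose l) * (real (M choose (L+1)) * real (L+1 choose l))"
      by (simp only: e')
    also have "\<dots> = real (M choose (L + 1)) * (real (L + 1 choose l))^2"
      unfolding power2_eq_square by (simp only: ac_simps)
    finally show ?thesis .
  qed
  finally show ?thesis using pos by (simp add: field_simps)
qed


lemma EE_CS:
  assumes "\<And>x. 0 \<le> P x"
  shows "(EE P D (\<lambda>h. a h * b h))^2 \<le> EE P D (\<lambda>h. (a h)^2) * EE P D (\<lambda>h. (b h)^2)"
proof -
  define w where "w h = (\<Prod>d\<in>D. P (h d))" for h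
  have w0: "0 \<le> w h" for h unfolding w_def using assms by (simp add: prod_nonneg)
  have 1: "EE P D (\<lambda>h. a h * b h) = (\<Sum>h\<in>PiE D (\<lambda>_. UNIV). (sqrt (w h) * a h) * (sqrt (w h) * b h))"
    unfolding EE_def w_def[symmetric] by (intro sum.cong refl) (simp add: w0 algebra_simps real_sqrt_mult[symmetric])
  have 2: "EE P D (\<lambda>h. (a h)^2) = (\<Sum>h\<in>PiE D (\<lambda>_. UNIV). (sqrt (w h) * a h)^2)"
    unfolding EE_def w_def[symmetric] by (intro sum.cong refl) (simp add: w0 power_mult_distrib)
  have 3: "EE P D (\<lambda>h. (b h)^2) = (\<Sum>h\<in>PiE D (\<lambda>_. UNIV). (sqrt (w h) * b h)^2)"
    unfolding EE_def w_def[symmetric] by (intro sum.cong refl) (simp add: w0 power_mult_distrib)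
  show ?thesis unfolding 1 2 3 by (rule Cauchy_Schwarz_ineq_sum)
qed

lemma EE_diff: "EE P D (\<lambda>h. f h - g h) = EE P D f - EE P D g"
  unfolding EE_def by (simp add: sum_subtractf algebra_simps)

lemma Tl_nonneg: "(\<And>x. 0 \<le> P x) \<Longrightarrow> 0 \<le> Tl G P L l"
  unfolding Tl_def by (rule EE_nonneg) auto

lemma perS_bound:
  fixes P :: "'x::finite \<Rightarrow> real"
  assumes pmf: "is_pmf P" and LM: "1 \<le> L" "L + 1 \<le> M" and S: "S \<subseteq> {1..M}" "card S = L + 1"
  defines "K \<equiv> {T. T \<subseteq> {1..M} \<and> card T = L + 1}"
  shows "(\<Sum>T\<in>K. EE P {1..M} (\<lambda>f. ind G (f ` S) * ind G (f ` T)))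
    \<le> nonedge_mass G P L + real (M choose (L+1)) * (nonedge_mass G P L)^2
       + (\<Sum>l=1..L. real (M choose (L+1)) * (real ((L+1) choose l)^2 / real (M choose l)) * Tl G P L l)"
proof -
  let ?g = "\<lambda>T. EE P {1..M} (\<lambda>f. ind G (f ` S) * ind G (f ` T))"
  let ?p = "nonedge_mass G P L"
  define cnt where "cnt l = card {T. T \<in> K \<and> card (S \<inter> T) = l}" for l
  have P0: "\<And>x. 0 \<le> P x" using pmf by (simp add: is_pmf_def)
  have finK: "finite K" unfolding K_def by (rule finite_subset[of _ "Pow {1..M}"]) auto
  have cardK: "card K = M choose (L+1)" unfolding K_def using n_subsets[of "{1..M}" "L+1"] by simp
  have fS: "finite S" using S(1) finite_subset by blast
  have "(\<Sum>T\<in>K. ?g T) = (\<Sum>l\<in>{0..L+1}. \<Sum>T\<in>{T. T \<in> K \<and> card (S \<inter> T) = l}. ?g T)"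
  proof (rule sum.group[symmetric])
    show "finite K" by (rule finK)
    show "finite {0..L+1}" by simp
    show "(\<lambda>T. card (S \<inter> T)) ` K \<subseteq> {0..L+1}"
      using card_mono[OF fS, of "S \<inter> _"] S(2) by auto
  qed
  also have "\<dots> = (\<Sum>l\<in>{0..L+1}. if l = L + 1 then ?p else real (cnt l) * Tl G P L l)"
  proof (rule sum.cong[OF refl])
    fix l assume l: "l \<in> {0..L+1}"
    show "(\<Sum>T\<in>{T. T \<in> K \<and> card (S \<inter> T) = l}. ?g T) = (if l = L + 1 then ?p else real (cnt l) * Tl G P L l)"
    proof (cases "l = L + 1")
      case True
      have "{T. T \<in> K \<and> card (S \<inter> T) = l} = {S}"
      proof (intro equalityI subsetI)
        fix T assume "T \<in> {T. T \<in> K \<and> card (S \<inter> T) = l}"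
        then have T: "T \<subseteq> {1..M}" "card T = L + 1" "card (S \<inter> T) = L + 1" using True by (auto simp: K_def)
        have fT: "finite T" using T(1) finite_subset by blast
        have "S \<inter> T = S" by (rule card_subset_eq[OF fS]) (use T S in auto)
        moreover have "S \<inter> T = T" by (rule card_subset_eq[OF fT]) (use T in auto)
        ultimately show "T \<in> {S}" by auto
      next
        fix T assume "T \<in> {S}" then show "T \<in> {T. T \<in> K \<and> card (S \<inter> T) = l}"
          using S True by (auto simp: K_def)
      qed
      then show ?thesis using True single_eq[OF pmf S] by simp
    next
      case False
      then have lL: "l \<le> L" using l by auto
      have "(\<Sum>T\<in>{T. T \<in> K \<and> card (S \<inter> T) = l}. ?g T) = (\<Sum>T\<in>{T. T \<in> K \<and> card (S \<inter> T) = l}. Tl G P L l)"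
        by (rule sum.cong[OF refl], rule pair_eq[OF pmf S(1) _ S(2)]) (use lL in \<open>auto simp: K_def\<close>)
      then show ?thesis using False by (simp add: cnt_def)
    qed
  qed
  also have "\<dots> = (\<Sum>l\<in>{0..L}. real (cnt l) * Tl G P L l) + ?p"
    by (simp add: sum.atLeast0_atMost_Suc)
  also have "(\<Sum>l\<in>{0..L}. real (cnt l) * Tl G P L l) = real (cnt 0) * Tl G P L 0 + (\<Sum>l=1..L. real (cnt l) * Tl G P L l)"
    by (subst sum.atLeast_Suc_atMost) auto
  also have "real (cnt 0) * Tl G P L 0 \<le> real (M choose (L+1)) * ?p^2"
  proof -
    have "cnt 0 \<le> card K" unfolding cnt_def by (rule card_mono[OF finK]) auto
    then show ?thesis unfolding T0_eq cardK[symmetric] by (intro mult_right_mono) auto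
  qed
  also have "(\<Sum>l=1..L. real (cnt l) * Tl G P L l) \<le> (\<Sum>l=1..L. real (M choose (L+1)) * (real ((L+1) choose l)^2 / real (M choose l)) * Tl G P L l)"
  proof (rule sum_mono)
    fix l assume l: "l \<in> {1..L}"
    have "cnt l = card {T. (T \<subseteq> {1..M} \<and> card T = L + 1) \<and> card (S \<inter> T) = l}"
      unfolding cnt_def K_def by simp
    then have "real (cnt l) \<le> real ((L + 1 choose l) * ((M - (L + 1)) choose (L + 1 - l)))"
      using count_le[OF S, of l] of_nat_le_iff by metis
    also have "\<dots> \<le> real (M choose (L + 1)) * (real (L + 1 choose l))^2 / real (M choose l)"
      by (rule binom_bound) (use l LM in auto)
    finally show "real (cnt l) * Tl G P L l \<le> real (M choose (L+1)) * (real ((L+1) choose l)^2 / real (M choose l)) * Tl G P L l"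
      by (intro mult_right_mono Tl_nonneg P0) simp
  qed
  finally show ?thesis by simp
qed


theorem mainTheorem11:
  fixes W :: "'x::finite \<Rightarrow> 'y::finite \<Rightarrow> real" and P :: "'x \<Rightarrow> real" and L M :: nat
  assumes "discrete_channel W" and "is_pmf P" and "1 \<le> L" and "L + 1 \<le> M"
  shows "code_prob W P M L \<le>
    (if nonedge_mass (hyperedges W) P L = 0 then 1
     else 1 - 1 / (1 / real (M choose (L + 1)) * 2 powr (real L * I_hyp (hyperedges W) P L)
                   + 1
                   + (\<Sum>l = 1..L. real ((L + 1) choose l) ^ 2 / real (M choose l)
                        * 2 powr (real L * theta_hyp (hyperedges W) P L l))))"
proof -
  define G where "G = hyperedges W"
  define p where "p = nonedge_mass G P L"
  define K where "K = {S. S \<subseteq> {1..M} \<and> card S = L + 1}"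
  define N where "N = real (M choose (L + 1))"
  define c where "c l = real ((L + 1) choose l) ^ 2 / real (M choose l)" for l
  define X where "X f = (\<Sum>S\<in>K. ind G (f ` S))" for f :: "nat \<Rightarrow> 'x"
  define Y where "Y f = (if X f = 0 then 0 else (1::real))" for f
  note pmf = assms(2)
  have P0: "\<And>x. 0 \<le> P x" using pmf by (simp add: is_pmf_def)
  have finK: "finite K" unfolding K_def by (rule finite_subset[of _ "Pow {1..M}"]) auto
  have cardK: "real (card K) = N" unfolding K_def N_def using n_subsets[of "{1..M}" "L+1"] by simp
  have Npos: "N > 0" unfolding N_def using assms(4) by simp
  have code_iff: "zero_error_list_code W M L f \<longleftrightarrow> X f = 0" for f
  proof -
    have "X f = 0 \<longleftrightarrow> (\<forall>S\<in>K. ind G (f ` S) = 0)"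
      unfolding X_def by (rule sum_nonneg_eq_0_iff[OF finK]) (simp add: ind_nonneg)
    also have "\<dots> \<longleftrightarrow> zero_error_list_code W M L f"
      unfolding zero_error_list_code_def K_def G_def ind_def by auto
    finally show ?thesis by simp
  qed
  have cp: "code_prob W P M L = 1 - EE P {1..M} Y"
  proof -
    have "code_prob W P M L = EE P {1..M} (\<lambda>f. 1 - Y f)"
      unfolding code_prob_def EE_def Y_def code_iff by (intro sum.cong) auto
    also have "\<dots> = 1 - EE P {1..M} Y"
      by (simp add: EE_diff EE_const[OF pmf])
    finally show ?thesis .
  qed
  have EY0: "0 \<le> EE P {1..M} Y" by (rule EE_nonneg[OF P0]) (simp add: Y_def)
  have p0: "0 \<le> p" unfolding p_def nonedge_eq by (rule EE_nonneg[OF P0]) (simp add: ind_nonneg)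
  show ?thesis
  proof (cases "p = 0")
    case True
    then show ?thesis using cp EY0 by (simp add: p_def G_def)
  next
    case False
    then have ppos: "p > 0" using p0 by simp
    have mu: "EE P {1..M} X = N * p"
    proof -
      have "EE P {1..M} X = (\<Sum>S\<in>K. EE P {1..M} (\<lambda>f. ind G (f ` S) * ind G (f ` S)))"
        unfolding X_def by (simp add: EE_sum ind_sq)
      also have "\<dots> = (\<Sum>S\<in>K. p)"
        by (rule sum.cong[OF refl]) (unfold K_def p_def, rule single_eq[OF pmf], auto)
      finally show ?thesis using cardK by simp
    qed
    have sig: "EE P {1..M} (\<lambda>f. (X f)^2) = (\<Sum>S\<in>K. \<Sum>T\<in>K. EE P {1..M} (\<lambda>f. ind G (f ` S) * ind G (f ` T)))"
    proof -
      have "(X f)^2 = (\<Sum>S\<in>K. \<Sum>T\<in>K. ind G (f ` S) * ind G (f ` T))" for f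
        unfolding X_def power2_eq_square by (simp add: sum_product)
      then show ?thesis by (simp add: EE_sum)
    qed
    have CS: "(EE P {1..M} X)^2 \<le> EE P {1..M} (\<lambda>f. (X f)^2) * EE P {1..M} Y"
    proof -
      have 1: "EE P {1..M} X = EE P {1..M} (\<lambda>f. X f * Y f)" by (rule EE_cong) (simp add: Y_def)
      have 2: "EE P {1..M} Y = EE P {1..M} (\<lambda>f. (Y f)^2)" by (rule EE_cong) (simp add: Y_def)
      show ?thesis unfolding 1 2 by (rule EE_CS[OF P0])
    qed
    define S2 where "S2 = EE P {1..M} (\<lambda>f. (X f)^2)"
    have S2le: "S2 \<le> N * (p + N * p^2 + (\<Sum>l=1..L. N * c l * Tl G P L l))"
    proof -
      have "S2 \<le> (\<Sum>S\<in>K. p + N * p^2 + (\<Sum>l=1..L. N * c l * Tl G P L l))"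
        unfolding S2_def sig
      proof (rule sum_mono)
        fix S assume "S \<in> K"
        then have S: "S \<subseteq> {1..M}" "card S = L + 1" by (auto simp: K_def)
        show "(\<Sum>T\<in>K. EE P {1..M} (\<lambda>f. ind G (f ` S) * ind G (f ` T))) \<le> p + N * p^2 + (\<Sum>l=1..L. N * c l * Tl G P L l)"
          using perS_bound[OF pmf assms(3,4) S, of G] unfolding K_def p_def N_def c_def by simp
      qed
      also have "\<dots> = N * (p + N * p^2 + (\<Sum>l=1..L. N * c l * Tl G P L l))"
        using cardK by simp
      finally show ?thesis .
    qed
    define B where "B = 1 / N * 2 powr (real L * I_hyp G P L) + 1 + (\<Sum>l = 1..L. c l * 2 powr (real L * theta_hyp G P L l))"
    have LI: "real L * I_hyp G P L = - log 2 p"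
      unfolding I_hyp_def p_def using assms(3) by simp
    have pI: "2 powr (real L * I_hyp G P L) = 1 / p"
      unfolding LI using ppos by (simp add: powr_minus_divide)
    have pth: "Tl G P L l \<le> p^2 * 2 powr (real L * theta_hyp G P L l)" for l
    proof -
      have th: "real L * theta_hyp G P L l = 2 * (real L * I_hyp G P L) + log 2 (Tl G P L l)"
        unfolding theta_hyp_def theta_eq using assms(3) by (simp add: algebra_simps G_def)
      have "2 powr (real L * theta_hyp G P L l) = (1 / p)^2 * 2 powr (log 2 (Tl G P L l))"
        unfolding th pI[symmetric] by (simp add: powr_add powr_realpow[symmetric] powr_powr mult.commute)
      moreover have "Tl G P L l \<le> 2 powr (log 2 (Tl G P L l))"
        using Tl_nonneg[of P G L l, OF P0] by (cases "Tl G P L l = 0") auto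
      ultimately show ?thesis using ppos by (simp add: field_simps)
    qed
    have Bge: "S2 \<le> B * (N * p)^2"
    proof -
      have "B * (N * p)^2 = N * p * (p * 2 powr (real L * I_hyp G P L)) + (N * p)^2
          + (\<Sum>l = 1..L. N^2 * c l * (p^2 * 2 powr (real L * theta_hyp G P L l)))"
        unfolding B_def using Npos by (simp add: field_simps sum_distrib_left sum_distrib_right power2_eq_square)
      also have "p * 2 powr (real L * I_hyp G P L) = 1" using pI ppos by simp
      finally have eq: "B * (N * p)^2 = N * p + (N * p)^2 + (\<Sum>l = 1..L. N^2 * c l * (p^2 * 2 powr (real L * theta_hyp G P L l)))"
        by simp
      have "(\<Sum>l=1..L. N * c l * Tl G P L l) * N \<le> (\<Sum>l = 1..L. N^2 * c l * (p^2 * 2 powr (real L * theta_hyp G P L l)))"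
        unfolding sum_distrib_right
      proof (rule sum_mono)
        fix l
        have "0 \<le> N^2 * c l" using Npos by (simp add: c_def)
        then have "N^2 * c l * Tl G P L l \<le> N^2 * c l * (p^2 * 2 powr (real L * theta_hyp G P L l))"
          using pth[of l] by (intro mult_left_mono)
        then show "N * c l * Tl G P L l * N \<le> N^2 * c l * (p^2 * 2 powr (real L * theta_hyp G P L l))"
          by (simp add: power2_eq_square algebra_simps)
      qed
      then show ?thesis using S2le unfolding eq by (simp add: algebra_simps power2_eq_square)
    qed
    have Bpos: "B \<ge> 1"
    proof -
      have "0 \<le> 1 / N * 2 powr (real L * I_hyp G P L)" using Npos by simp
      moreover have "0 \<le> (\<Sum>l = 1..L. c l * 2 powr (real L * theta_hyp G P L l))"
        by (rule sum_nonneg) (simp add: c_def)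
      ultimately show ?thesis unfolding B_def by linarith
    qed
    have mupos: "N * p > 0" using Npos ppos by simp
    have "(N * p)^2 \<le> B * (N * p)^2 * EE P {1..M} Y"
      using CS Bge EY0 mu unfolding S2_def by (metis mult_right_mono order_trans)
    then have "1 * (N * p)^2 \<le> (B * EE P {1..M} Y) * (N * p)^2" by (simp add: ac_simps)
    moreover have "(N * p)^2 > 0" using Npos ppos by simp
    ultimately have "1 \<le> B * EE P {1..M} Y" using mult_le_cancel_right_pos by blast
    then have "1 / B \<le> EE P {1..M} Y" using Bpos by (simp add: field_simps)
    then have "code_prob W P M L \<le> 1 - 1 / B" using cp by simp
    then show ?thesis using False unfolding B_def c_def p_def G_def N_def by simp
  qed
qed

end
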